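(* Let $q_A,q_B,q_C\in\mathbb{Q}[t,x]$ be \begin{align*} q_A&=x^2+(2t^2-6t+12)x+t^4-6t^3+24t^2-36t+36,\\ q_B&=x^3+(8t^2-18t)x^2+(20t^4-84t^3+72t^2)x+16t^6-96t^5+168t^4-144t^3+216t^2,\\ q_C&=x^3+(8t^2-18t)x^2+(20t^4-84t^3+72t^2)x+16t^6-96t^5+160t^4-72t^3, \end{align*} and for $H\in\{A,B,C\}$ let $Y_H$ be the affine plane curve $q_H(t,x)=0$. Then: (a) $Y_A(\mathbb{Q})=\{(0,-6)\}$; (b) $Y_B(\mathbb{Q})=\{(0,0),(3,0),(3,-18)\}$; (c) with $\eta(t)=\dfrac{t^3+3t^2-6t+1}{t(t-1)}$, there is a rational function $\lambda\in\mathbb{Q}(t)$ such that \[Y_C(\mathbb{Q})=\{(0,0)\}\cup\{(\eta(v),\lambda(v)):v\in\mathbb{Q}\setminus\{0,1\}\}.\] *)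

theory Defs
  imports "HOL-Computational_Algebra.Polynomial"
begin

definition qA :: "rat \<Rightarrow> rat \<Rightarrow> rat" where
  "qA t x = x^2 + (2*t^2 - 6*t + 12)*x + t^4 - 6*t^3 + 24*t^2 - 36*t + 36"

definition qB :: "rat \<Rightarrow> rat \<Rightarrow> rat" where
  "qB t x = x^3 + (8*t^2 - 18*t)*x^2 + (20*t^4 - 84*t^3 + 72*t^2)*x
            + 16*t^6 - 96*t^5 + 168*t^4 - 144*t^3 + 216*t^2"

definition qC :: "rat \<Rightarrow> rat \<Rightarrow> rat" where
  "qC t x = x^3 + (8*t^2 - 18*t)*x^2 + (20*t^4 - 84*t^3 + 72*t^2)*x
            + 16*t^6 - 96*t^5 + 160*t^4 - 72*t^3"

definition rat_points :: "(rat \<Rightarrow> rat \<Rightarrow> rat) \<Rightarrow> (rat \<times> rat) set" where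
  "rat_points q = {(t, x). q t x = 0}"

definition eta :: "rat \<Rightarrow> rat" where
  "eta t = (t^3 + 3*t^2 - 6*t + 1) / (t*(t - 1))"

end

theory Submission
  imports Defs "HOL-Computational_Algebra.Primes" "HOL-Computational_Algebra.Nth_Powers"
begin

datatype eis = Eis (ere: int) (eim: int)

instantiation eis :: comm_ring_1
begin
definition "zero_eis = Eis 0 0"
definition "one_eis = Eis 1 0"
definition "plus_eis x y = Eis (ere x + ere y) (eim x + eim y)"
definition "minus_eis x y = Eis (ere x - ere y) (eim x - eim y)"
definition "uminus_eis x = Eis (- ere x) (- eim x)"
definition "times_eis x y = Eis (ere x * ere y - eim x * eim y) (ere x * eim y + eim x * ere y - eim x * eim y)"
instance
  by standard (auto simp: zero_eis_def one_eis_def plus_eis_def minus_eis_def uminus_eis_def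
      times_eis_def algebra_simps intro!: eis.expand)
end

lemma eis_simps [simp]:
  "Eis a b + Eis c d = Eis (a + c) (b + d)"
  "Eis a b - Eis c d = Eis (a - c) (b - d)"
  "- Eis a b = Eis (-a) (-b)"
  "Eis a b * Eis c d = Eis (a*c - b*d) (a*d + b*c - b*d)"
  by (simp_all add: zero_eis_def one_eis_def plus_eis_def minus_eis_def uminus_eis_def times_eis_def)

lemma eis_zero: "(0::eis) = Eis 0 0" and eis_one: "(1::eis) = Eis 1 0"
  by (simp_all add: zero_eis_def one_eis_def)

definition N :: "eis \<Rightarrow> int" where "N z = ere z ^ 2 - ere z * eim z + eim z ^ 2"

lemma N_Eis: "N (Eis a b) = a^2 - a*b + b^2" by (simp add: N_def)

lemma N_nonneg: "N z \<ge> 0"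
proof -
  have "4 * N z = (2 * ere z - eim z)^2 + 3 * eim z ^ 2" by (simp add: N_def power2_eq_square algebra_simps)
  then show ?thesis by (smt (verit) zero_le_power2)
qed

lemma N_zero_iff: "N z = 0 \<longleftrightarrow> z = 0"
proof
  assume "N z = 0"
  have "4 * N z = (2 * ere z - eim z)^2 + 3 * eim z ^ 2" by (simp add: N_def power2_eq_square algebra_simps)
  then have "eim z = 0" "2 * ere z - eim z = 0"
    using \<open>N z = 0\<close> by (smt (verit) zero_le_power2 power_eq_0_iff zero_less_power2)+
  then show "z = 0" by (cases z) (simp add: eis_zero)
qed (simp add: N_def eis_zero)

lemma N_mult: "N (x * y) = N x * N y"
  by (cases x; cases y) (simp add: N_def power2_eq_square algebra_simps)

lemma N_one [simp]: "N 1 = 1" by (simp add: eis_one N_Eis)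

instance eis :: idom
proof
  fix a b :: eis assume "a \<noteq> 0" "b \<noteq> 0"
  then have "N a \<noteq> 0" "N b \<noteq> 0" by (simp_all add: N_zero_iff)
  then have "N (a*b) \<noteq> 0" by (simp add: N_mult)
  then show "a * b \<noteq> 0" by (simp add: N_zero_iff)
qed

lemma N_power: "N (x ^ n) = N x ^ n"
  by (induction n) (simp_all add: N_mult)

lemma of_nat_eis: "(of_nat n :: eis) = Eis (int n) 0"
  by (induction n) (simp_all add: eis_zero eis_one)

lemma of_int_eis: "(of_int k :: eis) = Eis k 0"
proof (cases k rule: int_cases)
  case (nonneg n) then show ?thesis by (simp add: of_nat_eis)
next
  case (neg n) then show ?thesis by (simp only: of_int_minus of_int_of_nat_eq of_nat_eis) simp
qed

lemma unit_iff_N: "(z dvd 1) \<longleftrightarrow> N z = 1"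
proof
  assume "z dvd 1" then obtain k where "1 = z * k" by (auto simp: dvd_def)
  then have "N z * N k = 1" by (metis N_mult N_one)
  moreover have "N z \<noteq> 0" using \<open>N z * N k = 1\<close> by auto
  ultimately show "N z = 1" using N_nonneg[of z] by (simp add: pos_zmult_eq_1_iff)
next
  assume "N z = 1"
  have "z * Eis (ere z - eim z) (- eim z) = Eis (N z) 0"
    by (cases z) (simp add: N_def power2_eq_square algebra_simps)
  with \<open>N z = 1\<close> show "z dvd 1" by (metis dvd_triv_left eis_one)
qed

lemma dvd_N: "x dvd y \<Longrightarrow> N x dvd N y"
  by (auto simp: dvd_def N_mult)


definition cnj :: "eis \<Rightarrow> eis" where "cnj z = Eis (ere z - eim z) (- eim z)"

lemma mult_cnj: "z * cnj z = Eis (N z) 0"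
  by (cases z) (simp add: cnj_def N_def power2_eq_square algebra_simps)

lemma N_cnj: "N (cnj z) = N z"
  by (simp add: cnj_def N_def power2_eq_square algebra_simps)

lemma rd_bound:
  fixes x n :: int assumes "n > 0"
  shows "\<bar>2 * (x - n * ((2*x + n) div (2*n)))\<bar> \<le> n"
proof -
  define k where "k = (2*x + n) div (2*n)"
  define m where "m = (2*x + n) mod (2*n)"
  have "2*x + n = 2*n*k + m" by (simp add: k_def m_def)
  moreover have "0 \<le> m" "m < 2*n" using assms by (simp_all add: m_def)
  ultimately have "2 * (x - n*k) = m - n" by (simp add: algebra_simps)
  with \<open>0 \<le> m\<close> \<open>m < 2*n\<close> show ?thesis unfolding k_def[symmetric] by simp
qed

lemma small_norm:
  fixes e1 e2 n :: int assumes "n > 0" "\<bar>2*e1\<bar> \<le> n" "\<bar>2*e2\<bar> \<le> n"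
  shows "e1^2 - e1*e2 + e2^2 < n^2"
proof -
  have a: "(2*e1)^2 \<le> n^2" "(2*e2)^2 \<le> n^2"
    using assms by (metis abs_le_square_iff abs_of_pos)+
  have "\<bar>2*e1\<bar> * \<bar>2*e2\<bar> \<le> n * n" using assms by (intro mult_mono) auto
  moreover have "- (2*e1)*(2*e2) \<le> \<bar>2*e1\<bar> * \<bar>2*e2\<bar>"
    by (metis abs_ge_minus_self abs_mult mult_minus_left)
  ultimately have b: "- (2*e1)*(2*e2) \<le> n^2" by (simp add: power2_eq_square)
  have "4 * (e1^2 - e1*e2 + e2^2) = (2*e1)^2 - (2*e1)*(2*e2) + (2*e2)^2" by (simp add: power2_eq_square algebra_simps)
  also have "\<dots> \<le> 3 * n^2" using a b by linarith
  also have "\<dots> < 4 * n^2" using assms by simp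
  finally show ?thesis by simp
qed

lemma eis_division:
  assumes "b \<noteq> 0"
  shows "\<exists>q r. a = q * b + r \<and> N r < N b"
proof -
  define n where "n = N b"
  have n: "n > 0" using assms N_nonneg[of b] N_zero_iff[of b] by (simp add: n_def)
  define x where "x = ere (a * cnj b)"
  define y where "y = eim (a * cnj b)"
  define q where "q = Eis ((2*x + n) div (2*n)) ((2*y + n) div (2*n))"
  define r where "r = a - q * b"
  have "r * cnj b = a * cnj b - q * (b * cnj b)" by (simp add: r_def algebra_simps)
  also have "a * cnj b = Eis x y" by (simp add: x_def y_def)
  also have "b * cnj b = Eis n 0" by (simp add: mult_cnj n_def)
  also have "Eis x y - q * Eis n 0 = Eis (x - n * ((2*x + n) div (2*n))) (y - n * ((2*y + n) div (2*n)))"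
    by (simp add: q_def mult.commute)
  finally have "N r * n = N (Eis (x - n * ((2*x + n) div (2*n))) (y - n * ((2*y + n) div (2*n))))"
    by (metis N_mult n_def N_cnj) 
  also have "\<dots> < n^2" unfolding N_Eis using n by (intro small_norm rd_bound)
  finally have "N r * n < n * n" by (simp add: power2_eq_square)
  then have "N r < n" using n by simp
  then show ?thesis unfolding n_def r_def by (intro exI[of _ q] exI[of _ r]) (simp add: r_def)
qed


definition cop :: "eis \<Rightarrow> eis \<Rightarrow> bool" where
  "cop a b \<longleftrightarrow> (\<forall>d. d dvd a \<longrightarrow> d dvd b \<longrightarrow> d dvd 1)"

definition pr :: "eis \<Rightarrow> bool" where
  "pr p \<longleftrightarrow> p \<noteq> 0 \<and> \<not> p dvd 1 \<and> (\<forall>d. d dvd p \<longrightarrow> d dvd 1 \<or> p dvd d)"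

lemma N_pos: "z \<noteq> 0 \<Longrightarrow> N z > 0"
  using N_nonneg[of z] N_zero_iff[of z] by linarith

lemma pr_prime:
  assumes "pr p" "p dvd a * b"
  shows "p dvd a \<or> p dvd b"
proof (rule ccontr)
  assume na: "\<not> (p dvd a \<or> p dvd b)"
  then have "a \<noteq> 0" by auto
  define S where "S = {p * x + a * y | x y. True}"
  have pS: "p \<in> S" unfolding S_def by (rule CollectI, rule exI[of _ 1], rule exI[of _ 0]) simp
  have aS: "a \<in> S" unfolding S_def by (rule CollectI, rule exI[of _ 0], rule exI[of _ 1]) simp
  have Sdiff: "e - q * d \<in> S" if "e \<in> S" "d \<in> S" for e d q
  proof -
    obtain x y where e: "e = p*x + a*y" using \<open>e \<in> S\<close> by (auto simp: S_def)
    obtain x' y' where d: "d = p*x' + a*y'" using \<open>d \<in> S\<close> by (auto simp: S_def)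
    have "e - q * d = p * (x - q*x') + a * (y - q*y')" by (simp add: e d algebra_simps)
    then show ?thesis by (auto simp: S_def)
  qed
  define P where "P = (\<lambda>n. \<exists>d\<in>S. d \<noteq> 0 \<and> nat (N d) = n)"
  have "P (nat (N a))" using aS \<open>a \<noteq> 0\<close> by (auto simp: P_def)
  then have "P (LEAST n. P n)" by (rule LeastI)
  then obtain d where d: "d \<in> S" "d \<noteq> 0" "nat (N d) = (LEAST n. P n)" by (auto simp: P_def)
  have dmin: "N d \<le> N e" if "e \<in> S" "e \<noteq> 0" for e
  proof -
    have "P (nat (N e))" using that by (auto simp: P_def)
    then have "(LEAST n. P n) \<le> nat (N e)" by (rule Least_le)
    then show ?thesis using d(3) N_nonneg[of e] N_nonneg[of d] by linarith
  qed
  have ddvd: "d dvd e" if "e \<in> S" for e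
  proof -
    obtain q r where qr: "e = q * d + r" "N r < N d" using eis_division[OF d(2)] by blast
    have "r = e - q * d" using qr(1) by simp
    then have "r \<in> S" using Sdiff[OF that d(1)] by simp
    then have "r = 0" using dmin qr(2) by force
    then show ?thesis using qr(1) by simp
  qed
  have "d dvd p" using ddvd pS .
  then have "d dvd 1 \<or> p dvd d" using assms(1) by (auto simp: pr_def)
  moreover have "\<not> p dvd d"
  proof
    assume "p dvd d"
    then have "p dvd a" using ddvd[OF aS] by (rule dvd_trans)
    then show False using na by simp
  qed
  ultimately have "d dvd 1" by simp
  obtain x y where dxy: "d = p*x + a*y" using d(1) by (auto simp: S_def)
  have "b * d = p * (x*b) + (a*b) * y" by (simp add: dxy algebra_simps)
  moreover have "p dvd a * b * y" using assms(2) by (rule dvd_mult2)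
  ultimately have "p dvd b * d" by (metis dvd_add dvd_triv_left)
  obtain k where "1 = d * k" using \<open>d dvd 1\<close> by (auto simp: dvd_def)
  then have "b = b * d * k" by (metis mult.assoc mult.right_neutral)
  then have "p dvd b" using \<open>p dvd b * d\<close> by (metis dvd_mult2)
  then show False using na by simp
qed

lemma exists_pr_divisor:
  assumes "c \<noteq> 0" "\<not> c dvd 1"
  shows "\<exists>p. pr p \<and> p dvd c"
proof -
  define P where "P = (\<lambda>n. \<exists>p. p dvd c \<and> \<not> p dvd 1 \<and> nat (N p) = n)"
  have "P (nat (N c))" unfolding P_def using assms(2) by (intro exI[of _ c]) simp
  then have "P (LEAST n. P n)" by (rule LeastI)
  then obtain p where p: "p dvd c" "\<not> p dvd 1" "nat (N p) = (LEAST n. P n)" by (auto simp: P_def)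
  have pmin: "N p \<le> N e" if "e dvd c" "\<not> e dvd 1" for e
  proof -
    have "P (nat (N e))" using that by (auto simp: P_def)
    then have "(LEAST n. P n) \<le> nat (N e)" by (rule Least_le)
    then show ?thesis using p(3) N_nonneg[of e] N_nonneg[of p] by linarith
  qed
  have p0: "p \<noteq> 0" using p(1) assms(1) by auto
  have "d dvd 1 \<or> p dvd d" if "d dvd p" for d
  proof (cases "d dvd 1")
    case True then show ?thesis by simp
  next
    case False note nd = this
    obtain k where k: "p = d * k" using \<open>d dvd p\<close> by (auto simp: dvd_def)
    have "d \<noteq> 0" "k \<noteq> 0" using p0 k by auto
    then have "N d > 0" "N k > 0" using N_pos by auto
    have "N p \<le> N d" using pmin[OF dvd_trans[OF that p(1)] nd] .
    moreover have "N p = N d * N k" using k by (simp add: N_mult)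
    ultimately have "N d * N k \<le> N d * 1" by simp
    then have "N k \<le> 1" using \<open>N d > 0\<close> by (rule mult_left_le_imp_le)
    then have "N k = 1" using \<open>N k > 0\<close> by simp
    then have "k dvd 1" by (simp add: unit_iff_N)
    then obtain k' where "1 = k * k'" by (auto simp: dvd_def)
    then have "d = p * k'" using k by (metis mult.assoc mult.right_neutral)
    then show ?thesis by simp
  qed
  then show ?thesis using p p0 by (auto simp: pr_def)
qed

lemma pr_N_gt1: "pr p \<Longrightarrow> N p > 1"
  using N_pos[of p] unit_iff_N[of p] by (auto simp: pr_def)

lemma cube_step:
  assumes "pr p" "p dvd a" "cop a b" "a * b = p^3 * c^3"
  shows "\<exists>a3. a = p^3 * a3 \<and> a3 * b = c^3 \<and> cop a3 b"
proof -
  have p0: "p \<noteq> 0" and pn: "\<not> p dvd 1" using assms(1) by (auto simp: pr_def)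
  have nb: "\<not> p dvd b" using assms(2,3) pn by (auto simp: cop_def)
  obtain a1 where a1: "a = p * a1" using assms(2) by (auto simp: dvd_def)
  have "p * (a1 * b) = p * (p^2 * c^3)" using assms(4) a1 by (simp add: power3_eq_cube power2_eq_square algebra_simps)
  then have e1: "a1 * b = p^2 * c^3" using p0 by simp
  then have "p dvd a1 * b" by (simp add: power2_eq_square)
  then have "p dvd a1" using pr_prime[OF assms(1)] nb by blast
  then obtain a2 where a2: "a1 = p * a2" by (auto simp: dvd_def)
  have "p * (a2 * b) = p * (p * c^3)" using e1 a2 by (simp add: power2_eq_square algebra_simps)
  then have e2: "a2 * b = p * c^3" using p0 by simp
  then have "p dvd a2" using pr_prime[OF assms(1), of a2 b] nb by simp
  then obtain a3 where a3: "a2 = p * a3" by (auto simp: dvd_def)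
  have "p * (a3 * b) = p * c^3" using e2 a3 by (simp add: algebra_simps)
  then have e3: "a3 * b = c^3" using p0 by simp
  have "a = p^3 * a3" using a1 a2 a3 by (simp add: power3_eq_cube algebra_simps)
  moreover have "cop a3 b" using assms(3) unfolding cop_def
    using \<open>a = p^3 * a3\<close> dvd_mult by blast
  ultimately show ?thesis using e3 by blast
qed

lemma cop_sym: "cop a b \<Longrightarrow> cop b a" by (auto simp: cop_def)

lemma cube_lemma:
  "cop a b \<Longrightarrow> a * b = c^3 \<Longrightarrow> \<exists>u g. u dvd 1 \<and> a = u * g^3"
proof (induction "nat (N c)" arbitrary: a b c rule: less_induct)
  case less
  show ?case
  proof (cases "c = 0")
    case True
    then have "a = 0 \<or> b = 0" using less.prems(2) by simp
    then show ?thesis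
    proof
      assume "a = 0" then show ?thesis by (intro exI[of _ 1] exI[of _ 0]) simp
    next
      assume "b = 0" then have "a dvd 1" using less.prems(1) by (auto simp: cop_def)
      then show ?thesis by (intro exI[of _ a] exI[of _ 1]) simp
    qed
  next
    case c0: False
    show ?thesis
    proof (cases "c dvd 1")
      case True
      then have "c^3 dvd 1^3" by (rule dvd_power_same)
      then have "a dvd 1" using less.prems(2) by (metis dvd_mult_left power_one)
      then show ?thesis by (intro exI[of _ a] exI[of _ 1]) simp
    next
      case False
      obtain p where p: "pr p" "p dvd c" using exists_pr_divisor[OF c0 False] by blast
      obtain c1 where c1: "c = p * c1" using p(2) by (auto simp: dvd_def)
      have "c1 \<noteq> 0" using c0 c1 by auto
      then have "N c1 > 0" by (rule N_pos)
      have "N c = N p * N c1" by (simp add: c1 N_mult)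
      then have lt: "nat (N c1) < nat (N c)" using pr_N_gt1[OF p(1)] \<open>N c1 > 0\<close> by simp
      have eq: "a * b = p^3 * c1^3" using less.prems(2) c1 by (simp add: power_mult_distrib)
      have "p dvd a * b" using eq by (simp add: power3_eq_cube)
      then have "p dvd a \<or> p dvd b" using pr_prime[OF p(1)] by blast
      then show ?thesis
      proof
        assume "p dvd a"
        then obtain a3 where a3: "a = p^3 * a3" "a3 * b = c1^3" "cop a3 b"
          using cube_step[OF p(1) _ less.prems(1) eq] by blast
        obtain u g where "u dvd 1" "a3 = u * g^3" using less.hyps[OF lt a3(3) a3(2)] by blast
        then show ?thesis using a3(1) by (intro exI[of _ u] exI[of _ "p*g"]) (simp add: power_mult_distrib algebra_simps)
      next
        assume "p dvd b"
        have eq': "b * a = p^3 * c1^3" using eq by (simp only: mult.commute)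
        obtain b3 where b3: "b = p^3 * b3" "b3 * a = c1^3" "cop b3 a"
          using cube_step[OF p(1) \<open>p dvd b\<close> cop_sym[OF less.prems(1)] eq'] by blast
        have "a * b3 = c1^3" using b3(2) by (simp add: mult.commute)
        then show ?thesis using less.hyps[OF lt cop_sym[OF b3(3)]] by blast
      qed
    qed
  qed
qed


lemma eis_unit_cases:
  assumes "N u = 1"
  shows "u = Eis 1 0 \<or> u = Eis (-1) 0 \<or> u = Eis 0 1 \<or> u = Eis 0 (-1) \<or> u = Eis 1 1 \<or> u = Eis (-1) (-1)"
proof (cases u)
  case (Eis x y)
  have e: "x^2 - x*y + y^2 = 1" using assms by (simp add: Eis N_Eis)
  have "4 = (2*x - y)^2 + 3*y^2" using e by (simp add: power2_eq_square algebra_simps)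
  then have "3*y^2 \<le> 4" by (smt (verit) zero_le_power2)
  then have "y^2 \<le> 1" by simp
  then have "\<bar>y\<bar> \<le> 1" by (metis abs_le_square_iff abs_one one_power2)
  then have "y = 0 \<or> y = 1 \<or> y = -1" by linarith
  moreover have "x = 1 \<or> x = -1" if "y = 0"
  proof -
    have "x^2 = 1" using e that by simp
    then show ?thesis by (metis power2_eq_1_iff)
  qed
  moreover have "x = 0 \<or> x = 1" if "y = 1"
  proof -
    have "x * (x - 1) = 0" using e that by (simp add: power2_eq_square algebra_simps)
    then show ?thesis by simp
  qed
  moreover have "x = 0 \<or> x = -1" if "y = -1"
  proof -
    have "x * (x + 1) = 0" using e that by (simp add: power2_eq_square algebra_simps)
    then show ?thesis by (simp add: add_eq_0_iff2)
  qed
  ultimately show ?thesis using Eis by auto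
qed

lemma odd_sq_form: "odd (a^2 + 3*b^2) \<Longrightarrow> odd (a + (b::int))"
  by (auto simp: power2_eq_square)

lemma omega_cube: "(Eis 0 1)^3 = 1"
  by (simp add: power3_eq_cube eis_one)

lemma norm_even_rep:
  "\<exists>a b. g^3 = Eis (a+b) (2*b) ^ 3"
proof (cases g)
  case (Eis c d)
  consider "even d" | "odd d" "even c" | "odd d" "odd c" by blast
  then show ?thesis
  proof cases
    case 1
    then obtain b where "d = 2*b" by blast
    then show ?thesis using Eis by (intro exI[of _ "c - b"] exI[of _ b]) simp
  next
    case 2
    then obtain b where b: "-c = 2*b" by (metis dvd_minus_iff evenE)
    have "(Eis 0 1 ^ 2 * g)^3 = ((Eis 0 1)^3)^2 * g^3" by (simp add: power_mult_distrib power_mult[symmetric] mult.commute)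
    also have "\<dots> = g^3" by (simp add: omega_cube)
    finally have "g^3 = Eis (d - c) (- c) ^ 3" using Eis by (simp add: power2_eq_square)
    then show ?thesis using b by (intro exI[of _ "d - c - b"] exI[of _ b]) simp
  next
    case 3
    then have "even (c - d)" by simp
    then obtain b where b: "c - d = 2*b" by blast
    have "(Eis 0 1 * g)^3 = (Eis 0 1)^3 * g^3" by (simp add: power_mult_distrib)
    also have "\<dots> = g^3" by (simp add: omega_cube)
    finally have "g^3 = Eis (-d) (c - d) ^ 3" using Eis by simp
    then show ?thesis using b by (intro exI[of _ "-d - b"] exI[of _ b]) simp
  qed
qed

lemma cube_formula:
  "Eis (a+b) (2*b) ^ 3 = Eis ((a^3 - 9*a*b^2) + (3*a^2*b - 3*b^3)) (2*(3*a^2*b - 3*b^3))"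
  by (simp add: power3_eq_cube power2_eq_square algebra_simps)

lemma sqrt3_cube:
  fixes p q s :: int
  assumes cpq: "coprime p q" and odd: "odd (p^2 + 3*q^2)" and n3: "\<not> 3 dvd p"
    and cube: "p^2 + 3*q^2 = s^3"
  shows "\<exists>a b. p = a^3 - 9*a*b^2 \<and> q = 3*a^2*b - 3*b^3"
proof -
  define m where "m = p^2 + 3*q^2"
  define \<alpha> where "\<alpha> = Eis (p+q) (2*q)"
  define \<beta> where "\<beta> = Eis (p-q) (-2*q)"
  have prod: "\<alpha> * \<beta> = (Eis s 0)^3"
    using cube by (simp add: \<alpha>_def \<beta>_def power3_eq_cube power2_eq_square algebra_simps)
  have Nalpha: "N \<alpha> = m" by (simp add: \<alpha>_def m_def N_Eis power2_eq_square algebra_simps)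
  have m3: "\<not> 3 dvd m"
  proof
    assume "3 dvd m"
    then have "3 dvd p^2" unfolding m_def by (metis dvd_add_left_iff dvd_triv_left)
    moreover have "prime (3::int)" by simp
    ultimately have "3 dvd p" using prime_dvd_power by blast
    then show False using n3 by simp
  qed
  have cop: "cop \<alpha> \<beta>"
    unfolding cop_def
  proof (intro allI impI)
    fix d assume d1: "d dvd \<alpha>" and d2: "d dvd \<beta>"
    have "d dvd \<alpha> + \<beta>" using d1 d2 by (rule dvd_add)
    moreover have "\<alpha> + \<beta> = Eis (2*p) 0" by (simp add: \<alpha>_def \<beta>_def)
    ultimately have "N d dvd 4 * p^2" using dvd_N by (fastforce simp: N_Eis power2_eq_square)
    have "d dvd \<alpha> - \<beta>" using d1 d2 by (rule dvd_diff)
    moreover have "\<alpha> - \<beta> = Eis (2*q) (4*q)" by (simp add: \<alpha>_def \<beta>_def)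
    ultimately have "N d dvd 12 * q^2" using dvd_N by (fastforce simp: N_Eis power2_eq_square)
    have "N d dvd m" using dvd_N[OF d1] Nalpha by simp
    have n2: "\<not> 2 dvd N d"
    proof
      assume "2 dvd N d" then have "2 dvd m" using \<open>N d dvd m\<close> by (rule dvd_trans)
      then show False using odd m_def by simp
    qed
    have n3': "\<not> 3 dvd N d"
    proof
      assume "3 dvd N d" then have "3 dvd m" using \<open>N d dvd m\<close> by (rule dvd_trans)
      then show False using m3 by simp
    qed
    have "prime (2::int)" "prime (3::int)" by simp_all
    then have "coprime 2 (N d)" "coprime 3 (N d)" using n2 n3' by (simp_all add: prime_imp_coprime)
    then have c2: "coprime (N d) 2" and c3: "coprime (N d) 3" by (simp_all add: coprime_commute)
    have "(4::int) = 2^2" "(12::int) = 2^2 * 3" by simp_all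
    then have c4: "coprime (N d) 4" and c12: "coprime (N d) 12" using c2 c3
      by (metis coprime_power_right_iff coprime_mult_right_iff)+
    have "N d dvd p^2" using \<open>N d dvd 4 * p^2\<close> c4 by (simp add: coprime_dvd_mult_right_iff)
    moreover have "N d dvd q^2" using \<open>N d dvd 12 * q^2\<close> c12 by (simp add: coprime_dvd_mult_right_iff)
    moreover have "coprime (p^2) (q^2)" using cpq by simp
    ultimately have "is_unit (N d)" by (metis coprime_common_divisor)
    then have "N d = 1" using N_nonneg[of d] by (simp add: zdvd1_eq)
    then show "d dvd 1" by (simp add: unit_iff_N)
  qed
  obtain u g where ug: "u dvd 1" "\<alpha> = u * g^3" using cube_lemma[OF cop prod] by blast
  obtain a b where ab: "g^3 = Eis (a+b) (2*b) ^ 3" using norm_even_rep by blast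
  define P where "P = a^3 - 9*a*b^2"
  define Q where "Q = 3*a^2*b - 3*b^3"
  have g3: "g^3 = Eis (P + Q) (2*Q)" using ab cube_formula by (simp add: P_def Q_def)
  have Nu: "N u = 1" using ug(1) unit_iff_N by simp
  have "m = N (Eis (a+b) (2*b)) ^ 3" using Nalpha ug(2) ab by (simp add: N_mult N_power Nu)
  also have "N (Eis (a+b) (2*b)) = a^2 + 3*b^2" by (simp add: N_Eis power2_eq_square algebra_simps)
  finally have "odd (a^2 + 3*b^2)" using odd m_def by simp
  then have "odd (a + b)" by (rule odd_sq_form)
  have "P + Q = (a+b)^3 - 4*b^2*(3*a+b)" by (simp add: P_def Q_def power3_eq_cube power2_eq_square algebra_simps)
  then have oX: "odd (P + Q)" using \<open>odd (a+b)\<close> by simp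
  have main: "Eis (p+q) (2*q) = u * Eis (P+Q) (2*Q)" using ug(2) g3 \<alpha>_def by simp
  from eis_unit_cases[OF Nu] show ?thesis
  proof (elim disjE)
    assume "u = Eis 1 0"
    then have "p = P" "q = Q" using main by simp_all
    then show ?thesis by (auto simp: P_def Q_def)
  next
    assume "u = Eis (-1) 0"
    then have "p = -P" "q = -Q" using main by simp_all
    then show ?thesis by (intro exI[of _ "-a"] exI[of _ "-b"]) (simp add: P_def Q_def)
  next
    assume "u = Eis 0 1"
    then have "2*q = P + Q - 2*Q" using main by simp
    then show ?thesis using oX by presburger
  next
    assume "u = Eis 0 (-1)"
    then have "2*q = -(P + Q) + 2*Q" using main by simp
    then show ?thesis using oX by presburger
  next
    assume "u = Eis 1 1"
    then have "2*q = P + Q" using main by simp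
    then show ?thesis using oX by presburger
  next
    assume "u = Eis (-1) (-1)"
    then have "2*q = -(P + Q)" using main by simp
    then show ?thesis using oX by presburger
  qed
qed


lemma int_cube_coprime:
  fixes u v c :: int
  assumes "coprime u v" "u * v = c^3"
  shows "\<exists>e. u = e^3"
proof (cases "u = 0 \<or> v = 0")
  case True
  then show ?thesis
  proof
    assume "u = 0" then show ?thesis by (intro exI[of _ 0]) simp
  next
    assume "v = 0"
    then have "is_unit u" using assms(1) by simp
    then have "\<bar>u\<bar> = 1" by (simp add: zdvd1_eq)
    then have "u = 1 \<or> u = -1" by arith
    then show ?thesis
    proof
      assume "u = 1" then show ?thesis by (intro exI[of _ 1]) simp
    next
      assume "u = -1" then show ?thesis by (intro exI[of _ "-1"]) simp
    qed
  qed
next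
  case False
  have "coprime (int (nat \<bar>u\<bar>)) (int (nat \<bar>v\<bar>))" using assms(1) by simp
  then have cn: "coprime (nat \<bar>u\<bar>) (nat \<bar>v\<bar>)" by (simp only: coprime_int_iff)
  have "\<bar>u\<bar> * \<bar>v\<bar> = \<bar>c\<bar> ^ 3" using assms(2) by (simp add: abs_mult [symmetric] power_abs)
  then have "nat (\<bar>u\<bar> * \<bar>v\<bar>) = nat (\<bar>c\<bar> ^ 3)" by simp
  then have "nat \<bar>u\<bar> * nat \<bar>v\<bar> = nat \<bar>c\<bar> ^ 3" by (simp add: nat_mult_distrib nat_power_eq)
  then have "is_nth_power 3 (nat \<bar>u\<bar> * nat \<bar>v\<bar>)" by (rule is_nth_powerI)
  moreover have "nat \<bar>u\<bar> > 0" "nat \<bar>v\<bar> > 0" using False by auto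
  ultimately have "is_nth_power 3 (nat \<bar>u\<bar>)" using is_nth_power_mult_coprime_natD(1)[OF cn] by blast
  then obtain k where k: "nat \<bar>u\<bar> = k^3" by (rule is_nth_powerE)
  then have "int (nat \<bar>u\<bar>) = int (k^3)" by simp
  then have "\<bar>u\<bar> = (int k)^3" by simp
  then show ?thesis
    by (cases "u \<ge> 0") (auto intro: exI[of _ "int k"] exI[of _ "- int k"] simp: abs_if split: if_splits)
qed

lemma int_cube_coprime3:
  fixes a b c x :: int
  assumes "coprime a b" "coprime a c" "coprime b c" "a * b * c = x^3"
  shows "\<exists>e f g. a = e^3 \<and> b = f^3 \<and> c = g^3"
proof -
  have "coprime a (b*c)" using assms by simp
  moreover have "a * (b*c) = x^3" using assms(4) by (simp add: mult.assoc)
  ultimately obtain e where e: "a = e^3" using int_cube_coprime by blast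
  have "coprime (b*c) a" using \<open>coprime a (b*c)\<close> by (simp add: coprime_commute)
  moreover have "(b*c) * a = x^3" using assms(4) by (simp add: ac_simps)
  ultimately obtain y where y: "b*c = y^3" using int_cube_coprime by blast
  obtain f where "b = f^3" using int_cube_coprime[OF assms(3) y] by blast
  moreover have "c * b = y^3" using y by (simp add: mult.commute)
  then obtain g where "c = g^3" using int_cube_coprime[of c b y] assms(3) by (auto simp: coprime_commute)
  ultimately show ?thesis using e by blast
qed

lemma cop_shift: "coprime (m::int) (k*m + n) \<longleftrightarrow> coprime m n"
  by (simp add: coprime_iff_gcd_eq_1 gcd_add_mult)

lemma cop_prime: "prime (p::int) \<Longrightarrow> \<not> p dvd m \<Longrightarrow> coprime m p"
  using prime_imp_coprime[of p m] by (simp add: coprime_commute)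

lemma cube_dvd_cube: "(d::int)^3 dvd z^3 \<Longrightarrow> d dvd z"
  using pow_divides_pow_iff[of 3 d z] by simp


lemma parity_ab:
  fixes a b :: int
  assumes "even (a + b)"
  shows "even (a^3 - 9*a*b^2)" "even (3*a^2*b - 3*b^3)"
proof -
  have "a^3 - 9*a*b^2 = a*(a - 3*b)*(a + 3*b)" by (simp add: power2_eq_square power3_eq_cube algebra_simps)
  moreover have "a + 3*b = (a + b) + 2*b" by simp
  then have "even (a + 3*b)" using assms by simp
  ultimately show "even (a^3 - 9*a*b^2)" by simp
  have "3*a^2*b - 3*b^3 = 3*b*(a - b)*(a + b)" by (simp add: power2_eq_square power3_eq_cube algebra_simps)
  then show "even (3*a^2*b - 3*b^3)" using assms by simp
qed

lemma prime2: "prime (2::int)" and prime3: "prime (3::int)" by simp_all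

lemma three_dvd_sq: "3 dvd (x::int)^2 \<Longrightarrow> 3 dvd x"
  using prime_dvd_power[OF prime3] by blast

lemma caseA:
  fixes p q w :: int
  assumes cpq: "coprime p q" and opq: "odd (p + q)" and n3: "\<not> 3 dvd p"
    and eq: "2*p*(p^2 + 3*q^2) = w^3" and p0: "p \<noteq> 0"
  shows "\<exists>a b c. a^3 + b^3 + c^3 = 0 \<and> a*b*c \<noteq> 0 \<and> \<bar>a*b*c\<bar>^3 \<le> \<bar>2*p\<bar>"
proof -
  define m where "m = p^2 + 3*q^2"
  have "m = (p+q)^2 + 2*(q^2 - p*q)" by (simp add: m_def power2_eq_square algebra_simps)
  then have om: "odd m" using opq by simp
  have m3: "\<not> 3 dvd m"
  proof
    assume "3 dvd m"
    then have "3 dvd p^2" unfolding m_def by (metis dvd_add_left_iff dvd_triv_left)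
    then show False using n3 three_dvd_sq by blast
  qed
  have "coprime p (p*p + 3*q^2)"
    unfolding cop_shift using cpq cop_prime[OF prime3 n3] by simp
  then have cpm: "coprime p m" by (simp add: m_def power2_eq_square)
  have c2m: "coprime 2 m" using cop_prime[OF prime2, of m] om by (simp add: coprime_commute)
  have c: "coprime (2*p) m" using cpm c2m by simp
  have "(2*p) * m = w^3" using eq by (simp add: m_def)
  then obtain c1 where c1: "2*p = c1^3" using int_cube_coprime[OF c] by blast
  have "m * (2*p) = w^3" using eq by (simp add: m_def mult.commute)
  then obtain s where s: "m = s^3" using int_cube_coprime[of m "2*p" w] c by (auto simp: coprime_commute)
  have om': "odd (p^2 + 3*q^2)" using om by (simp add: m_def)
  have s': "p^2 + 3*q^2 = s^3" using s by (simp add: m_def)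
  obtain a b where ab: "p = a^3 - 9*a*b^2" "q = 3*a^2*b - 3*b^3"
    using sqrt3_cube[OF cpq om' n3 s'] by blast
  have pf: "p = a*(a - 3*b)*(a + 3*b)" using ab(1) by (simp add: power2_eq_square power3_eq_cube algebra_simps)
  have qf: "q = 3*b*(a - b)*(a + b)" using ab(2) by (simp add: power2_eq_square power3_eq_cube algebra_simps)
  have cab: "coprime a b"
  proof (rule coprimeI)
    fix d assume "d dvd a" "d dvd b"
    then have "d dvd p" "d dvd q" unfolding pf qf by (simp_all add: dvd_mult2 dvd_mult)
    then show "is_unit d" using cpq coprime_common_divisor by blast
  qed
  have a3: "\<not> 3 dvd a" using n3 pf by auto
  have oab: "odd (a + b)"
  proof
    assume "even (a + b)"
    then have "2 dvd p" "2 dvd q" using parity_ab ab by auto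
    then have "is_unit (2::int)" using cpq coprime_common_divisor by blast
    then show False by simp
  qed
  have o1: "odd (a - 3*b)"
  proof -
    have "a - 3*b = (a + b) - 2*(2*b)" by simp
    then show ?thesis using oab by simp
  qed
  have o2: "odd (a + 3*b)"
  proof -
    have "a + 3*b = (a + b) + 2*b" by simp
    then show ?thesis using oab by simp
  qed
  have ca3: "coprime a 3" using cop_prime[OF prime3 a3] .
  have "coprime a (1*a + (-3*b))" unfolding cop_shift using ca3 cab by simp
  then have ca1: "coprime a (a - 3*b)" by simp
  have "coprime a (1*a + 3*b)" unfolding cop_shift using ca3 cab by simp
  then have ca2: "coprime a (a + 3*b)" by simp
  have c21: "coprime 2 (a - 3*b)" using cop_prime[OF prime2, of "a - 3*b"] o1 by (simp add: coprime_commute)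
  have c22: "coprime 2 (a + 3*b)" using cop_prime[OF prime2, of "a + 3*b"] o2 by (simp add: coprime_commute)
  have n31: "\<not> 3 dvd (a - 3*b)"
  proof
    assume h: "3 dvd (a - 3*b)"
    have "3 dvd 3*b" by simp
    from dvd_add[OF h this] have "3 dvd (a - 3*b) + 3*b" .
    then show False using a3 by simp
  qed
  have cb1: "coprime b (a - 3*b)"
  proof -
    have "coprime b ((-3)*b + a)" unfolding cop_shift using cab by (simp add: coprime_commute)
    then show ?thesis by simp
  qed
  have x1: "coprime (a - 3*b) 2" "coprime (a - 3*b) 3" "coprime (a - 3*b) b"
    using c21 cop_prime[OF prime3 n31] cb1 by (simp_all add: coprime_commute)
  have "coprime (a - 3*b) (2*(3*b))" unfolding coprime_mult_right_iff using x1 by blast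
  then have "coprime (a - 3*b) (6*b)" by simp
  then have "coprime (a - 3*b) (1*(a - 3*b) + 6*b)" unfolding cop_shift .
  then have c12: "coprime (a - 3*b) (a + 3*b)" by (simp add: add.commute)
  have "(2*a) * (a - 3*b) * (a + 3*b) = c1^3" using c1 pf by (simp add: algebra_simps)
  then obtain g e f where gef: "2*a = g^3" "a - 3*b = e^3" "a + 3*b = f^3"
    using int_cube_coprime3[of "2*a" "a - 3*b" "a + 3*b" c1] ca1 ca2 c21 c22 c12 by auto
  have sum: "e^3 + f^3 + (-g)^3 = 0" using gef by simp
  have "(e * f * (-g))^3 = -(e^3 * f^3 * g^3)" by (simp add: power_mult_distrib)
  also have "\<dots> = -((a - 3*b) * (a + 3*b) * (2*a))" by (simp only: gef[symmetric])
  also have "\<dots> = - (2*p)" using pf by (simp add: algebra_simps)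
  finally have prod: "(e * f * (-g))^3 = - (2*p)" .
  then have "e * f * (-g) \<noteq> 0" using p0 by auto
  moreover have "\<bar>e * f * (-g)\<bar>^3 = \<bar>2*p\<bar>" using prod by (metis power_abs abs_minus_cancel)
  ultimately show ?thesis using sum by (intro exI[of _ e] exI[of _ f] exI[of _ "-g"]) simp
qed


lemma caseB:
  fixes p q r w :: int
  assumes cpq: "coprime p q" and opq: "odd (p + q)" and pr: "p = 3*r"
    and eq: "2*p*(p^2 + 3*q^2) = w^3" and p0: "p \<noteq> 0"
  shows "\<exists>a b c. a^3 + b^3 + c^3 = 0 \<and> a*b*c \<noteq> 0 \<and> \<bar>a*b*c\<bar>^3 \<le> \<bar>2*p\<bar>"
proof -
  have r0: "r \<noteq> 0" using p0 pr by simp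
  have q3: "\<not> 3 dvd q"
  proof
    assume "3 dvd q"
    moreover have "3 dvd p" using pr by simp
    ultimately have "is_unit (3::int)" using cpq coprime_common_divisor by blast
    then show False by simp
  qed
  have cqr: "coprime q r"
  proof (rule coprimeI)
    fix d assume "d dvd q" "d dvd r"
    then have "d dvd p" using pr by simp
    then show "is_unit d" using \<open>d dvd q\<close> cpq coprime_common_divisor by blast
  qed
  have oqr: "odd (q + r)"
  proof -
    have "p + q = (q + r) + 2*r" using pr by simp
    then show ?thesis using opq by simp
  qed
  define m where "m = q^2 + 3*r^2"
  have "m = (q+r)^2 + 2*(r^2 - q*r)" by (simp add: m_def power2_eq_square algebra_simps)
  then have om: "odd m" using oqr by simp
  have m3: "\<not> 3 dvd m"
  proof
    assume "3 dvd m"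
    then have "3 dvd q^2" unfolding m_def by (metis dvd_add_left_iff dvd_triv_left)
    then show False using q3 three_dvd_sq by blast
  qed
  have eq2: "(18*r) * m = w^3" using eq pr by (simp add: m_def power2_eq_square algebra_simps)
  have "coprime r ((3*r)*r + q^2)" unfolding cop_shift using cqr by (simp add: coprime_commute)
  then have crm: "coprime r m" by (simp add: m_def power2_eq_square algebra_simps)
  have c2m: "coprime 2 m" using cop_prime[OF prime2, of m] om by (simp add: coprime_commute)
  have c3m: "coprime 3 m" using cop_prime[OF prime3, of m] m3 by (simp add: coprime_commute)
  have "coprime (2*(3*(3*r))) m" unfolding coprime_mult_left_iff using c2m c3m crm by blast
  then have c: "coprime (18*r) m" by simp
  then obtain c where c1: "18*r = c^3" using int_cube_coprime[OF _ eq2] by blast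
  have "m * (18*r) = w^3" using eq2 by (simp add: mult.commute)
  then obtain s where s: "m = s^3" using int_cube_coprime[of m "18*r" w] c by (auto simp: coprime_commute)
  have om': "odd (q^2 + 3*r^2)" using om by (simp add: m_def)
  have s': "q^2 + 3*r^2 = s^3" using s by (simp add: m_def)
  obtain a b where ab: "q = a^3 - 9*a*b^2" "r = 3*a^2*b - 3*b^3"
    using sqrt3_cube[OF cqr om' q3 s'] by blast
  have qf: "q = a*(a - 3*b)*(a + 3*b)" using ab(1) by (simp add: power2_eq_square power3_eq_cube algebra_simps)
  have rf: "r = 3*(b*(a - b)*(a + b))" using ab(2) by (simp add: power2_eq_square power3_eq_cube algebra_simps)
  have "c^3 = 3*(6*r)" using c1 by simp
  then have "3 dvd c^3" by (metis dvd_triv_left)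
  then have "3 dvd c" using prime_dvd_power[OF prime3] by blast
  then obtain c' where c': "c = 3*c'" by blast
  have "27 * c'^3 = 27 * (2*(b*(a - b)*(a + b)))" using c1 c' rf by (simp add: power_mult_distrib)
  then have c'e: "2*b*(a - b)*(a + b) = c'^3" by simp
  have cab: "coprime a b"
  proof (rule coprimeI)
    fix d assume "d dvd a" "d dvd b"
    then have "d dvd q" "d dvd r" unfolding qf rf by (simp_all add: dvd_mult2 dvd_mult)
    then show "is_unit d" using cqr coprime_common_divisor by blast
  qed
  have oab: "odd (a + b)"
  proof
    assume "even (a + b)"
    then have "2 dvd q" "2 dvd r" using parity_ab ab by auto
    then have "is_unit (2::int)" using cqr coprime_common_divisor by blast
    then show False by simp
  qed
  have o1: "odd (a - b)"
  proof -
    have "a - b = (a + b) - 2*b" by simp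
    then show ?thesis using oab by simp
  qed
  have c21: "coprime 2 (a - b)" using cop_prime[OF prime2, of "a - b"] o1 by (simp add: coprime_commute)
  have c22: "coprime 2 (a + b)" using cop_prime[OF prime2, of "a + b"] oab by (simp add: coprime_commute)
  have cb1: "coprime b (a - b)"
  proof -
    have "coprime b ((-1)*b + a)" unfolding cop_shift using cab by (simp add: coprime_commute)
    then show ?thesis by simp
  qed
  have cb2: "coprime b (a + b)"
  proof -
    have "coprime b (1*b + a)" unfolding cop_shift using cab by (simp add: coprime_commute)
    then show ?thesis by (simp add: add.commute)
  qed
  have x1: "coprime (a - b) 2" "coprime (a - b) b" using c21 cb1 by (simp_all add: coprime_commute)
  have "coprime (a - b) (2*b)" unfolding coprime_mult_right_iff using x1 by blast
  then have "coprime (a - b) (1*(a - b) + 2*b)" unfolding cop_shift .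
  then have c12: "coprime (a - b) (a + b)" by (simp add: add.commute)
  have "(2*b) * (a - b) * (a + b) = c'^3" using c'e by simp
  then obtain g e f where gef: "2*b = g^3" "a - b = e^3" "a + b = f^3"
    using int_cube_coprime3[of "2*b" "a - b" "a + b" c'] c21 c22 cb1 cb2 c12 by auto
  have sum: "f^3 + (-e)^3 + (-g)^3 = 0" using gef by simp
  have "(f * (-e) * (-g))^3 = f^3 * e^3 * g^3" by (simp add: power_mult_distrib)
  also have "\<dots> = (a + b) * (a - b) * (2*b)" by (simp only: gef[symmetric])
  also have "\<dots> = c'^3" using c'e by (simp add: algebra_simps)
  finally have prod: "(f * (-e) * (-g))^3 = c'^3" .
  have "c' \<noteq> 0" using c1 c' r0 by auto
  then have "f * (-e) * (-g) \<noteq> 0" using prod by auto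
  moreover have "\<bar>f * (-e) * (-g)\<bar>^3 = \<bar>c'^3\<bar>" by (simp only: power_abs[symmetric] prod)
  moreover have "27 * \<bar>c'^3\<bar> = 18 * \<bar>r\<bar>" using c1 c' by (simp add: power_mult_distrib abs_mult)
  then have "\<bar>c'^3\<bar> \<le> \<bar>2*p\<bar>" using pr by (simp add: abs_mult)
  ultimately show ?thesis using sum by (intro exI[of _ f] exI[of _ "-e"] exI[of _ "-g"]) simp
qed



lemma core:
  fixes x y z :: int
  assumes eq: "x^3 + y^3 + z^3 = 0" and nz: "x*y*z \<noteq> 0" and cxy: "coprime x y"
    and ox: "odd x" and oy: "odd y"
  shows "\<exists>a b c. a^3 + b^3 + c^3 = 0 \<and> a*b*c \<noteq> 0 \<and> \<bar>a*b*c\<bar> < \<bar>x*y*z\<bar>"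
proof -
  have x0: "x \<noteq> 0" "y \<noteq> 0" "z \<noteq> 0" using nz by auto
  have "even (x + y)" using ox oy by simp
  then obtain p where p: "x + y = 2*p" by blast
  have "even (x - y)" using ox oy by simp
  then obtain q where q: "x - y = 2*q" by blast
  have xp: "x = p + q" "y = p - q" using p q by linarith+
  have cpq: "coprime p q"
  proof (rule coprimeI)
    fix d assume "d dvd p" "d dvd q"
    then have "d dvd x" "d dvd y" using xp by auto
    then show "is_unit d" using cxy coprime_common_divisor by blast
  qed
  have opq: "odd (p + q)" using ox xp by simp
  have iden: "(p+q)^3 + (p-q)^3 = 2*p*(p^2 + 3*q^2)"
    by (simp add: power2_eq_square power3_eq_cube algebra_simps)
  have key: "2*p*(p^2 + 3*q^2) = (-z)^3" using eq iden xp by simp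
  have p0: "p \<noteq> 0"
  proof
    assume "p = 0" then have "(-z)^3 = 0" using key by simp
    then show False using x0 by simp
  qed
  have "even ((-z)^3)" using key[symmetric] by simp
  then have ze: "even z" by simp
  have n11: "\<not> (\<bar>x\<bar> = 1 \<and> \<bar>y\<bar> = 1)"
  proof
    assume h: "\<bar>x\<bar> = 1 \<and> \<bar>y\<bar> = 1"
    then have "x = 1 \<or> x = -1" "y = 1 \<or> y = -1" by arith+
    then have "x^3 = x" "y^3 = y" by auto
    then have zx: "z^3 = -(x+y)" using eq by simp
    obtain k where k: "z = 2*k" using ze by blast
    have "k \<noteq> 0" using k x0 by simp
    then have "\<bar>k\<bar>^3 \<ge> 1" by (simp add: one_le_power)
    moreover have "\<bar>z^3\<bar> = 8 * \<bar>k\<bar>^3" using k by (simp add: power_mult_distrib abs_mult power_abs)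
    moreover have "\<bar>z^3\<bar> \<le> 2" using zx h abs_triangle_ineq[of x y] by simp
    ultimately show False by linarith
  qed
  have "\<bar>x\<bar> \<ge> 1" "\<bar>y\<bar> \<ge> 1" using x0 by auto
  then have "\<bar>x\<bar> * \<bar>y\<bar> \<ge> 2"
  proof (cases "\<bar>x\<bar> = 1")
    case True
    then have "\<bar>y\<bar> \<ge> 2" using n11 \<open>\<bar>y\<bar> \<ge> 1\<close> by auto
    then show ?thesis using True by simp
  next
    case False
    then have "\<bar>x\<bar> \<ge> 2" using \<open>\<bar>x\<bar> \<ge> 1\<close> by auto
    then have "2 * 1 \<le> \<bar>x\<bar> * \<bar>y\<bar>" using \<open>\<bar>y\<bar> \<ge> 1\<close> by (intro mult_mono) auto
    then show ?thesis by simp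
  qed
  then have xy2: "\<bar>x*y\<bar> \<ge> 2" by (simp add: abs_mult)
  define m where "m = p^2 + 3*q^2"
  have m1: "m \<ge> 1"
  proof -
    have "p^2 > 0" using p0 by simp
    moreover have "q^2 \<ge> 0" by simp
    ultimately show ?thesis unfolding m_def by linarith
  qed
  have hz: "\<bar>z\<bar>^3 = \<bar>2*p\<bar> * m"
  proof -
    have "\<bar>z\<bar>^3 = \<bar>(-z)^3\<bar>" by (simp add: power_abs)
    also have "\<dots> = \<bar>2*p*m\<bar>" using key by (simp add: m_def)
    also have "\<dots> = \<bar>2*p\<bar> * m" using m1 by (simp add: abs_mult)
    finally show ?thesis .
  qed
  have "\<bar>x*y*z\<bar>^3 = \<bar>x*y\<bar>^3 * (\<bar>2*p\<bar> * m)" by (simp add: abs_mult power_mult_distrib hz)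
  moreover have "\<bar>x*y\<bar>^3 \<ge> 2^3" using xy2 by (rule power_mono) simp
  moreover have "\<bar>2*p\<bar> * m \<ge> \<bar>2*p\<bar>" using mult_left_mono[OF m1, of "\<bar>2*p\<bar>"] by simp
  moreover have "\<bar>2*p\<bar> > 0" using p0 by simp
  ultimately have "\<bar>x*y*z\<bar>^3 \<ge> 8 * \<bar>2*p\<bar>"
    using mult_mono[of 8 "\<bar>x*y\<bar>^3" "\<bar>2*p\<bar>" "\<bar>2*p\<bar> * m"] by simp
  then have big: "\<bar>2*p\<bar> < \<bar>x*y*z\<bar>^3" using \<open>\<bar>2*p\<bar> > 0\<close> by linarith
  obtain a b c where abc: "a^3 + b^3 + c^3 = 0" "a*b*c \<noteq> 0" "\<bar>a*b*c\<bar>^3 \<le> \<bar>2*p\<bar>"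
  proof (cases "3 dvd p")
    case True
    then obtain r where "p = 3*r" by blast
    then show ?thesis using caseB[OF cpq opq _ key p0] that by blast
  next
    case False
    then show ?thesis using caseA[OF cpq opq _ key p0] that by blast
  qed
  have "\<bar>a*b*c\<bar>^3 < \<bar>x*y*z\<bar>^3" using abc(3) big by linarith
  then have "\<bar>a*b*c\<bar> < \<bar>x*y*z\<bar>" by (rule power_less_imp_less_base) simp
  then show ?thesis using abc by blast
qed

lemma not_both_even: "coprime (a::int) b \<Longrightarrow> even a \<Longrightarrow> odd b"
proof
  assume "coprime a b" "even a" "even b"
  then have "is_unit (2::int)" using coprime_common_divisor by blast
  then show False by simp
qed

lemma cop3:
  fixes x y z :: int
  assumes "x^3 + y^3 + z^3 = 0" "coprime x y"
  shows "coprime y z"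
proof (rule coprimeI)
  fix d assume "d dvd y" "d dvd z"
  then have "d^3 dvd y^3" "d^3 dvd z^3" by (simp_all add: dvd_power_same)
  then have "d^3 dvd y^3 + z^3" by (rule dvd_add)
  then have "d^3 dvd -(y^3 + z^3)" by (simp only: dvd_minus_iff)
  moreover have "-(y^3 + z^3) = x^3" using assms(1) by simp
  ultimately have "d^3 dvd x^3" by simp
  then have "d dvd x" by (rule cube_dvd_cube)
  then show "is_unit d" using \<open>d dvd y\<close> assms(2) coprime_common_divisor by blast
qed

theorem flt3:
  fixes x y z :: int
  shows "x^3 + y^3 + z^3 = 0 \<Longrightarrow> x*y*z = 0"
proof (induction "nat \<bar>x*y*z\<bar>" arbitrary: x y z rule: less_induct)
  case less
  show ?case
  proof (rule ccontr)
    assume nz: "x*y*z \<noteq> 0"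
    have smaller: "False" if "a^3 + b^3 + c^3 = 0" "a*b*c \<noteq> 0" "\<bar>a*b*c\<bar> < \<bar>x*y*z\<bar>" for a b c :: int
    proof -
      have "nat \<bar>a*b*c\<bar> < nat \<bar>x*y*z\<bar>" using that(3) by (subst nat_less_eq_zless) simp_all
      then have "a*b*c = 0" using less.hyps that(1) by blast
      then show False using that(2) by simp
    qed
    show False
    proof (cases "coprime x y")
      case False
      define d where "d = gcd x y"
      have dx: "d dvd x" "d dvd y" by (simp_all add: d_def)
      have "d \<ge> 0" by (simp add: d_def)
      moreover have "d \<noteq> 1" using False by (simp add: d_def coprime_iff_gcd_eq_1)
      moreover have "d \<noteq> 0" using nz by (simp add: d_def)
      ultimately have d2: "d \<ge> 2" by linarith
      have "d^3 dvd x^3" "d^3 dvd y^3" using dx by (simp_all add: dvd_power_same)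
      then have "d^3 dvd x^3 + y^3" by (rule dvd_add)
      then have "d^3 dvd -(x^3 + y^3)" by (simp only: dvd_minus_iff)
      moreover have "-(x^3 + y^3) = z^3" using less.prems by simp
      ultimately have "d^3 dvd z^3" by simp
      then have "d dvd z" by (rule cube_dvd_cube)
      obtain x' y' z' where xyz: "x = d*x'" "y = d*y'" "z = d*z'" using dx \<open>d dvd z\<close> by (auto elim!: dvdE)
      have "d^3 * (x'^3 + y'^3 + z'^3) = 0" using less.prems xyz by (simp add: power_mult_distrib algebra_simps)
      then have e': "x'^3 + y'^3 + z'^3 = 0" using d2 by simp
      have pr: "\<bar>x*y*z\<bar> = d^3 * \<bar>x'*y'*z'\<bar>" using xyz d2 by (simp add: abs_mult power3_eq_cube)
      have nz': "x'*y'*z' \<noteq> 0" using nz xyz by simp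
      then have "\<bar>x'*y'*z'\<bar> > 0" by simp
      moreover have "d^3 \<ge> 2^3" using d2 by (rule power_mono) simp
      then have "1 < d^3" by simp
      from mult_strict_right_mono[OF this \<open>\<bar>x'*y'*z'\<bar> > 0\<close>]
      have "\<bar>x'*y'*z'\<bar> < \<bar>x*y*z\<bar>" unfolding pr by simp
      then show False using smaller[OF e' nz'] by blast
    next
      case True
      have cyz: "coprime y z" using cop3[OF less.prems True] .
      have e2: "y^3 + x^3 + z^3 = 0" using less.prems by simp
      have cxz: "coprime x z" using cop3[OF e2] True by (simp add: coprime_commute)
      consider "odd x" "odd y" | "even x" | "even y" by blast
      then show False
      proof cases
        case 1
        then show False using core[OF less.prems nz True] smaller by blast
      next
        case 2
        have "odd y" using 2 True not_both_even by blast
        moreover have "odd z" using 2 cxz not_both_even by blast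
        moreover have "y^3 + z^3 + x^3 = 0" using less.prems by simp
        moreover have "y*z*x \<noteq> 0" using nz by simp
        ultimately obtain a b c where abc: "a^3 + b^3 + c^3 = 0" "a*b*c \<noteq> 0" "\<bar>a*b*c\<bar> < \<bar>y*z*x\<bar>"
          using core cyz by blast
        have "\<bar>a*b*c\<bar> < \<bar>x*y*z\<bar>" using abc(3) by (simp add: ac_simps)
        then show False using smaller[OF abc(1,2)] by simp
      next
        case 3
        have "odd x" using 3 True not_both_even coprime_commute by blast
        moreover have "odd z" using 3 cyz not_both_even by blast
        moreover have "x^3 + z^3 + y^3 = 0" using less.prems by simp
        moreover have "x*z*y \<noteq> 0" using nz by simp
        ultimately obtain a b c where abc: "a^3 + b^3 + c^3 = 0" "a*b*c \<noteq> 0" "\<bar>a*b*c\<bar> < \<bar>x*z*y\<bar>"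
          using core cxz by blast
        have "\<bar>a*b*c\<bar> < \<bar>x*y*z\<bar>" using abc(3) by (simp add: ac_simps)
        then show False using smaller[OF abc(1,2)] by simp
      qed
    qed
  qed
qed


lemma flt3_rat:
  fixes a b :: rat
  assumes eq: "a^3 + b^3 = 1"
  shows "a = 0 \<or> b = 0"
proof -
  obtain m n where mn: "quotient_of a = (m, n)" by (cases "quotient_of a")
  obtain k l where kl: "quotient_of b = (k, l)" by (cases "quotient_of b")
  have a: "a = of_int m / of_int n" and n: "n > 0"
    using mn by (simp_all add: quotient_of_div quotient_of_denom_pos)
  have b: "b = of_int k / of_int l" and l: "l > 0"
    using kl by (simp_all add: quotient_of_div quotient_of_denom_pos)
  have "(of_int m / of_int n)^3 + (of_int k / of_int l)^3 = (1::rat)" using eq a b by simp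
  then have "(of_int m)^3 * (of_int l)^3 + (of_int k)^3 * (of_int n)^3 = ((of_int n)^3 * (of_int l)^3 :: rat)"
    using n l by (simp add: field_simps power_divide)
  then have "of_int (m^3 * l^3 + k^3 * n^3) = (of_int (n^3 * l^3) :: rat)" by simp
  then have "m^3 * l^3 + k^3 * n^3 = n^3 * l^3" by (simp only: of_int_eq_iff)
  then have "(m*l)^3 + (k*n)^3 + (-(n*l))^3 = 0" by (simp add: power_mult_distrib)
  then have "(m*l)*(k*n)*(-(n*l)) = 0" by (rule flt3)
  then have "m = 0 \<or> k = 0" using n l by auto
  then show ?thesis using a b by auto
qed


lemma partA: "rat_points qA = {(0, -6)}"
proof (intro set_eqI iffI)
  fix P assume "P \<in> rat_points qA"
  then obtain t x where P: "P = (t, x)" and q: "qA t x = 0" by (auto simp: rat_points_def)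
  have "4 * qA t x = (2*x + 2*t^2 - 6*t + 12)^2 + 12 * t^2"
    by (simp add: qA_def power2_eq_square power3_eq_cube power4_eq_xxxx algebra_simps)
  then have h: "(2*x + 2*t^2 - 6*t + 12)^2 + 12 * t^2 = 0" using q by simp
  have "(2*x + 2*t^2 - 6*t + 12)^2 \<ge> 0" "t^2 \<ge> 0" by simp_all
  then have "t^2 = 0" "(2*x + 2*t^2 - 6*t + 12)^2 = 0" using h by linarith+
  then have "t = 0" "2*x + 2*t^2 - 6*t + 12 = 0" by simp_all
  then have "t = 0" "x = -6" by simp_all
  then show "P \<in> {(0, -6)}" using P by simp
next
  fix P assume "P \<in> {(0::rat, -6::rat)}"
  then show "P \<in> rat_points qA" by (simp add: rat_points_def qA_def)
qed


lemma qB_subst: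
  fixes t w :: rat
  shows "qB t (t*w - 2*t^2) = t^2 * (2*(w^2 - 6*w + 12)*t^2 + (w^3 - 18*w^2 + 72*w - 144)*t + 216)"
  unfolding qB_def by algebra

lemma partB_dir:
  fixes t x :: rat
  assumes q: "qB t x = 0"
  shows "(t = 0 \<and> x = 0) \<or> (t = 3 \<and> x = 0) \<or> (t = 3 \<and> x = -18)"
proof (cases "t = 0")
  case True
  then have "x^3 = 0" using q by (simp add: qB_def)
  then show ?thesis using True by simp
next
  case t0: False
  define w where "w = (x + 2*t^2) / t"
  have xw: "x = t*w - 2*t^2" using t0 by (simp add: w_def field_simps power2_eq_square)
  define A where "A = w^2 - 6*w + 12"
  define B where "B = w^3 - 18*w^2 + 72*w - 144"
  have "t^2 * (2*A*t^2 + B*t + 216) = 0" using q qB_subst[of t w] xw by (simp add: A_def B_def)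
  then have E: "2*A*t^2 + B*t + 216 = 0" using t0 by simp
  define S where "S = 4*A*t + B"
  have "S^2 = 8*A*(2*A*t^2 + B*t) + B^2" by (simp add: S_def power2_eq_square algebra_simps)
  also have "2*A*t^2 + B*t = -216" using E by simp
  finally have S2: "S^2 = B^2 - 1728*A" by simp
  have "B^2 - 1728*A = w*(w-6)^2*(w^3 - 24*w^2 + 144*w - 288)"
    unfolding A_def B_def by algebra
  with S2 have S2': "S^2 = w*(w-6)^2*(w^3 - 24*w^2 + 144*w - 288)" by simp
  show ?thesis
  proof (cases "w = 0 \<or> w = 6")
    case True
    then have "S^2 = 0" using S2' by auto
    then have "S = 0" by simp
    moreover have "A = 12" "B = -144" using True by (auto simp: A_def B_def power2_eq_square power3_eq_cube)
    ultimately have "t = 3" by (simp add: S_def)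
    then show ?thesis using True xw by auto
  next
    case False
    then have w0: "w \<noteq> 0" and w6: "w - 6 \<noteq> 0" by auto
    define v where "v = S / (w - 6)"
    define c3 where "c3 = w^3 - 24*w^2 + 144*w - 288"
    have S2'': "S^2 = (w * c3) * (w-6)^2" using S2' unfolding c3_def by (simp add: ac_simps)
    have "v^2 = S^2 / (w-6)^2" by (simp add: v_def power_divide)
    also have "\<dots> = w * c3" using w6 S2'' by simp
    finally have hv: "v^2 = w * c3" .
    define Dn where "Dn = 2*w*(w-6)"
    have Dn0: "Dn \<noteq> 0" using w0 w6 by (simp add: Dn_def)
    have "(w^2 + v)^3 + (w^2 - v)^3 = 2*w^6 + 6*w^2*v^2" by algebra
    also have "\<dots> = 2*w^6 + 6*w^3*c3" using hv by (simp add: power2_eq_square power3_eq_cube algebra_simps)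
    also have "\<dots> = Dn^3" unfolding c3_def Dn_def by algebra
    finally have num: "(w^2 + v)^3 + (w^2 - v)^3 = Dn^3" .
    have "((w^2 + v)/Dn)^3 + ((w^2 - v)/Dn)^3 = ((w^2 + v)^3 + (w^2 - v)^3) / Dn^3"
      by (simp only: power_divide add_divide_distrib[of "(w^2+v)^3" "(w^2-v)^3" "Dn^3"])
    also have "\<dots> = 1" using num Dn0 by simp
    finally have "((w^2 + v)/Dn) = 0 \<or> ((w^2 - v)/Dn) = 0" by (rule flt3_rat)
    then have "v = - (w^2) \<or> v = w^2" using Dn0 by (auto simp: add_eq_0_iff2)
    then have "v^2 = w^4" by auto
    then have "w * c3 = w^4" using hv by simp
    moreover have "w^4 = w * w^3" by algebra
    ultimately have "w * c3 = w * w^3" by simp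
    then have "c3 = w^3" using w0 by (metis mult_left_cancel)
    then have "(w - 3)^2 + 3 = 0" unfolding c3_def by algebra
    moreover have "(w - 3)^2 \<ge> 0" by simp
    ultimately show ?thesis by linarith
  qed
qed

lemma partB: "rat_points qB = {(0, 0), (3, 0), (3, -18)}"
proof (intro set_eqI iffI)
  fix P assume "P \<in> rat_points qB"
  then obtain t x where P: "P = (t, x)" and q: "qB t x = 0" by (auto simp: rat_points_def)
  show "P \<in> {(0, 0), (3, 0), (3, -18)}" using partB_dir[OF q] P by auto
next
  fix P assume "P \<in> {(0::rat, 0::rat), (3, 0), (3, -18)}"
  then show "P \<in> rat_points qB" by (auto simp: rat_points_def qB_def)
qed


lemma qC_subst:
  fixes t w :: rat
  shows "qC t (t*w - 2*t^2) = t^3 * ((w^3 - 18*w^2 + 72*w - 72) + t*(2*w^2 - 12*w + 16))"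
  unfolding qC_def by algebra

definition Nq :: "rat poly" where "Nq = [:1, -6, 3, 1:]"
definition Dq :: "rat poly" where "Dq = [:0, -1, 1:]"
definition pC :: "rat poly" where "pC = Nq * [:4, -2:] * Dq - smult 2 (Nq^2)"
definition rC :: "rat poly" where "rC = Dq^2"

lemma poly_Nq: "poly Nq v = v^3 + 3*v^2 - 6*v + 1"
  by (simp add: Nq_def power2_eq_square power3_eq_cube algebra_simps)
lemma poly_Dq: "poly Dq v = v*(v - 1)"
  by (simp add: Dq_def algebra_simps)
lemma poly_pC: "poly pC v = poly Nq v * (4 - 2*v) * poly Dq v - 2 * (poly Nq v)^2"
  by (simp add: pC_def) (simp add: algebra_simps)
lemma poly_rC: "poly rC v = (poly Dq v)^2"
  by (simp add: rC_def)

lemma eta_alt: "eta v = poly Nq v / poly Dq v"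
  by (simp add: eta_def poly_Nq poly_Dq)

lemma lam_alt:
  assumes "v \<noteq> 0" "v \<noteq> 1"
  shows "poly pC v / poly rC v = eta v * (4 - 2*v) - 2 * (eta v)^2"
proof -
  have D0: "poly Dq v \<noteq> 0" using assms by (simp add: poly_Dq)
  show ?thesis unfolding eta_alt poly_pC poly_rC using D0
    by (simp add: field_simps power2_eq_square)
qed

lemma FG:
  fixes v :: rat
  shows "(4-2*v)^3 - 18*(4-2*v)^2 + 72*(4-2*v) - 72 = -8 * poly Nq v"
    and "2*(4-2*v)^2 - 12*(4-2*v) + 16 = 8 * poly Dq v"
  unfolding poly_Nq poly_Dq by algebra+

lemma partC: "\<exists>p r :: rat poly. r \<noteq> 0 \<and> (\<forall>v. v \<noteq> 0 \<and> v \<noteq> 1 \<longrightarrow> poly r v \<noteq> 0) \<and>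
          rat_points qC = {(0, 0)} \<union> {(eta v, poly p v / poly r v) | v. v \<noteq> 0 \<and> v \<noteq> 1}"
proof (intro exI conjI allI impI)
  show "rC \<noteq> 0"
  proof
    assume "rC = 0" then have "poly rC 2 = 0" by simp
    then show False by (simp add: poly_rC poly_Dq)
  qed
  fix v :: rat assume "v \<noteq> 0 \<and> v \<noteq> 1"
  then show "poly rC v \<noteq> 0" by (simp add: poly_rC poly_Dq)
next
  show "rat_points qC = {(0, 0)} \<union> {(eta v, poly pC v / poly rC v) | v. v \<noteq> 0 \<and> v \<noteq> 1}"
  proof (intro set_eqI iffI)
    fix P assume "P \<in> rat_points qC"
    then obtain t x where P: "P = (t, x)" and q: "qC t x = 0" by (auto simp: rat_points_def)
    show "P \<in> {(0, 0)} \<union> {(eta v, poly pC v / poly rC v) | v. v \<noteq> 0 \<and> v \<noteq> 1}"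
    proof (cases "t = 0")
      case True
      then have "x^3 = 0" using q by (simp add: qC_def)
      then show ?thesis using True P by simp
    next
      case t0: False
      define w where "w = (x + 2*t^2) / t"
      have xw: "x = t*w - 2*t^2" using t0 by (simp add: w_def field_simps power2_eq_square)
      define v where "v = (4 - w) / 2"
      have wv: "w = 4 - 2*v" by (simp add: v_def field_simps)
      have "t^3 * ((w^3 - 18*w^2 + 72*w - 72) + t*(2*w^2 - 12*w + 16)) = 0"
        using q qC_subst[of t w] xw by simp
      then have "(w^3 - 18*w^2 + 72*w - 72) + t*(2*w^2 - 12*w + 16) = 0" using t0 by simp
      then have "-8 * poly Nq v + t * (8 * poly Dq v) = 0" unfolding wv FG .
      then have tD: "t * poly Dq v = poly Nq v" by simp
      have D0: "poly Dq v \<noteq> 0"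
      proof
        assume "poly Dq v = 0"
        then have "v = 0 \<or> v = 1" by (simp add: poly_Dq)
        moreover have "poly Nq v = 0" using tD \<open>poly Dq v = 0\<close> by simp
        ultimately show False by (auto simp: poly_Nq)
      qed
      then have v01: "v \<noteq> 0" "v \<noteq> 1" by (auto simp: poly_Dq)
      have te: "t = eta v" using tD D0 by (simp add: eta_alt field_simps)
      have "x = poly pC v / poly rC v" using lam_alt[OF v01] te xw wv by simp
      then show ?thesis using P te v01 by blast
    qed
  next
    fix P assume "P \<in> {(0, 0)} \<union> {(eta v, poly pC v / poly rC v) | v. v \<noteq> 0 \<and> v \<noteq> 1}"
    then consider "P = (0, 0)" | v where "v \<noteq> 0" "v \<noteq> 1" "P = (eta v, poly pC v / poly rC v)" by blast
    then show "P \<in> rat_points qC"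
    proof cases
      case 1 then show ?thesis by (simp add: rat_points_def qC_def)
    next
      case (2 v)
      define t where "t = eta v"
      define w where "w = 4 - 2*v"
      have D0: "poly Dq v \<noteq> 0" using 2 by (simp add: poly_Dq)
      have tD: "t * poly Dq v = poly Nq v" using D0 by (simp add: t_def eta_alt)
      have x: "poly pC v / poly rC v = t*w - 2*t^2" using lam_alt[OF 2(1,2)] by (simp add: t_def w_def algebra_simps)
      have "qC t (t*w - 2*t^2) = t^3 * ((w^3 - 18*w^2 + 72*w - 72) + t*(2*w^2 - 12*w + 16))"
        by (rule qC_subst)
      also have "(w^3 - 18*w^2 + 72*w - 72) + t*(2*w^2 - 12*w + 16) = -8 * poly Nq v + t * (8 * poly Dq v)"
        unfolding w_def FG ..
      also have "\<dots> = 0" using tD by simp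
      finally have "qC t (t*w - 2*t^2) = 0" by simp
      then show ?thesis using 2(3) x by (simp add: rat_points_def t_def)
    qed
  qed
qed

theorem lemma3p2:
  shows "rat_points qA = {(0, -6)}
     \<and> rat_points qB = {(0, 0), (3, 0), (3, -18)}
     \<and> (\<exists>p r :: rat poly. r \<noteq> 0 \<and> (\<forall>v. v \<noteq> 0 \<and> v \<noteq> 1 \<longrightarrow> poly r v \<noteq> 0) \<and>
          rat_points qC = {(0, 0)} \<union> {(eta v, poly p v / poly r v) | v. v \<noteq> 0 \<and> v \<noteq> 1})"
  using partA partB partC by blast


end
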